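(* Assume $\mathcal{R}(\Theta^* )\le r$, $\mathcal{R}^*(\Phi(x))\le d$ for all $x\in\mathcal{X}$, and $\|\Phi(x)\|_{\max}\le\phi_{\max}$ for all $x\in\mathcal{X}$. Let $\bar r>0$. Then for every $\Theta\in\mathbb{R}^{k_1\times k_2}$ with $\mathcal{R}(\Theta)\le\bar r$, the largest eigenvalue of the Hessian of $\mathcal{L}_n$ (viewed as a function of $\mathrm{vec}(\Theta)$) at $\Theta$ is at most $4k_1k_2\phi_{\max}^2\exp(2\bar rd)$; i.e. $\mathcal{L}_n$ is $4k_1k_2\phi_{\max}^2\exp(2\bar rd)$-smooth on $\{\Theta:\mathcal{R}(\Theta)\le\bar r\}$.
   Context: Let $\mathcal{X}\subset\mathbb{R}^p$ be a bounded set with finite positive volume and $\mathcal{U}_{\mathcal{X}}$ the uniform distribution on it. $\Phi:\mathcal{X}\to\mathbb{R}^{k_1\times k_2}$ is a natural statistic, $\langle\langle M,N\rangle\rangle=\sum_{i,j}M_{ij}N_{ij}$, $\mathcal{R}$ a norm on $\mathbb{R}^{k_1\times k_2}$ with dual norm $\mathcal{R}^*(M)=\sup\{\langle\langle M,N\rangle\rangle:\mathcal{R}(N)\le1\}$, $\|M\|_{\max}=\max_{ij}|M_{ij}|$, $r,d,\phi_{\max}$ constants, $\Theta^*$ the true parameter of the density $f_{\mathbf{x}}(x;\Theta)\propto\exp(\langle\langle\Theta,\Phi(x)\rangle\rangle)$ on $\mathcal{X}$. Given samples $x^{(1)},\dots,x^{(n)}\in\mathcal{X}$, $\tilde\Phi(x)=\Phi(x)-\mathbb{E}_{\mathcal{U}_{\mathcal{X}}}[\Phi]$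 and $\mathcal{L}_n(\Theta)=\frac1n\sum_{t=1}^n\exp(-\langle\langle\Theta,\tilde\Phi(x^{(t)})\rangle\rangle)$. *)

theory Defs
  imports "HOL-Analysis.Analysis"
begin

text \<open>Matrices in R^(k1 x k2) are rendered as real^'k2^'k1 (row index 'k1, column index 'k2),
  with k1 = CARD('k1), k2 = CARD('k2).\<close>

definition frob_inner :: "real^'k2^'k1 \<Rightarrow> real^'k2^'k1 \<Rightarrow> real" where
  "frob_inner M N = (\<Sum>i\<in>UNIV. \<Sum>j\<in>UNIV. M$i$j * N$i$j)"

definition max_norm :: "real^'k2^'k1 \<Rightarrow> real" where
  "max_norm M = Max {\<bar>M$i$j\<bar> | i j. True}"

definition is_norm :: "(real^'k2^'k1 \<Rightarrow> real) \<Rightarrow> bool" where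
  "is_norm R \<longleftrightarrow> (\<forall>M. 0 \<le> R M) \<and> (\<forall>M. R M = 0 \<longleftrightarrow> M = 0)
     \<and> (\<forall>c M. R (c *\<^sub>R M) = \<bar>c\<bar> * R M) \<and> (\<forall>M N. R (M + N) \<le> R M + R N)"

definition dual_norm :: "(real^'k2^'k1 \<Rightarrow> real) \<Rightarrow> real^'k2^'k1 \<Rightarrow> real" where
  "dual_norm R M = Sup {frob_inner M N | N. R N \<le> 1}"

definition vecm :: "real^'k2^'k1 \<Rightarrow> real^('k1 \<times> 'k2)" where
  "vecm M = (\<chi> ij. M $ fst ij $ snd ij)"

definition unvec :: "real^('k1 \<times> 'k2) \<Rightarrow> real^'k2^'k1" where
  "unvec v = (\<chi> i j. v $ (i, j))"

definition unif_mean :: "('a::euclidean_space) set \<Rightarrow> ('a \<Rightarrow> real^'k2^'k1) \<Rightarrow> real^'k2^'k1" where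
  "unif_mean X Phi = (\<chi> i j. (LINT x:X|lborel. Phi x $ i $ j) / measure lborel X)"

definition centered_stat :: "('a::euclidean_space) set \<Rightarrow> ('a \<Rightarrow> real^'k2^'k1) \<Rightarrow> 'a \<Rightarrow> real^'k2^'k1" where
  "centered_stat X Phi x = Phi x - unif_mean X Phi"

definition loss_n :: "('a::euclidean_space) set \<Rightarrow> ('a \<Rightarrow> real^'k2^'k1) \<Rightarrow> nat \<Rightarrow> (nat \<Rightarrow> 'a)
    \<Rightarrow> real^'k2^'k1 \<Rightarrow> real" where
  "loss_n X Phi n xs Theta =
     (1 / real n) * (\<Sum>t=1..n. exp (- frob_inner Theta (centered_stat X Phi (xs t))))"

definition partial_deriv :: "(real^'n \<Rightarrow> real) \<Rightarrow> 'n \<Rightarrow> real^'n \<Rightarrow> real" where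
  "partial_deriv f k v = deriv (\<lambda>t. f (v + t *\<^sub>R axis k 1)) 0"

definition hessian :: "(real^'n \<Rightarrow> real) \<Rightarrow> real^'n \<Rightarrow> real^'n^'n" where
  "hessian f v = (\<chi> k l. partial_deriv (\<lambda>w. partial_deriv f l w) k v)"

definition is_eigenvalue :: "real^'n^'n \<Rightarrow> real \<Rightarrow> bool" where
  "is_eigenvalue A mu \<longleftrightarrow> (\<exists>v. v \<noteq> 0 \<and> A *v v = mu *\<^sub>R v)"

definition largest_eigenvalue :: "real^'n^'n \<Rightarrow> real" where
  "largest_eigenvalue A = Max {mu. is_eigenvalue A mu}"

end

theory Submission
  imports Defs
begin

lemma frob_inner_eq: "frob_inner M N = M \<bullet> N"
  by (simp add: frob_inner_def inner_vec_def)

lemma isn_zero: "is_norm R \<Longrightarrow> R 0 = 0"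
  by (simp add: is_norm_def)

lemma isn_sum: assumes "is_norm R" "finite S"
  shows "R (\<Sum>b\<in>S. f b) \<le> (\<Sum>b\<in>S. R (f b))"
  using assms(2)
proof (induction S rule: finite_induct)
  case empty then show ?case using isn_zero[OF assms(1)] by simp
next
  case (insert x F)
  have "R (f x + sum f F) \<le> R (f x) + R (sum f F)" using assms(1) by (simp add: is_norm_def)
  then show ?case using insert by simp
qed

lemma isn_upper: assumes "is_norm (R :: real^'k2^'k1 \<Rightarrow> real)"
  shows "R N \<le> (\<Sum>b\<in>Basis. R b) * norm N"
proof -
  have "R N = R (\<Sum>b\<in>Basis. (N \<bullet> b) *\<^sub>R b)" by (simp add: euclidean_representation)
  also have "\<dots> \<le> (\<Sum>b\<in>Basis. R ((N \<bullet> b) *\<^sub>R b))" by (rule isn_sum[OF assms]) simp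
  also have "\<dots> = (\<Sum>b\<in>Basis. \<bar>N \<bullet> b\<bar> * R b)" using assms by (simp add: is_norm_def)
  also have "\<dots> \<le> (\<Sum>b\<in>Basis. norm N * R b)"
    by (rule sum_mono, rule mult_right_mono) (use assms Basis_le_norm in \<open>auto simp: is_norm_def\<close>)
  also have "\<dots> = (\<Sum>b\<in>Basis. R b) * norm N" by (simp add: sum_distrib_left mult.commute)
  finally show ?thesis .
qed

lemma isn_cont: assumes "is_norm (R :: real^'k2^'k1 \<Rightarrow> real)" shows "continuous_on UNIV R"
proof -
  define K where "K = (\<Sum>b\<in>Basis. R b)"
  have K0: "0 \<le> K" unfolding K_def using assms by (simp add: is_norm_def sum_nonneg)
  have "K-lipschitz_on UNIV R"
    unfolding lipschitz_on_def
  proof (intro conjI ballI K0)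
    fix x y :: "real^'k2^'k1"
    have t1: "R x \<le> R y + R (x - y)" using assms unfolding is_norm_def by (metis add.commute diff_add_cancel)
    have t2: "R y \<le> R x + R (y - x)" using assms unfolding is_norm_def by (metis add.commute diff_add_cancel)
    have s: "R (y - x) = R (x - y)" using assms unfolding is_norm_def
      by (metis abs_neg_one minus_diff_eq mult_1 scaleR_minus1_left)
    have "R (x - y) \<le> K * norm (x - y)" unfolding K_def by (rule isn_upper[OF assms])
    then show "dist (R x) (R y) \<le> K * dist x y"
      using t1 t2 s by (simp add: dist_real_def dist_norm abs_le_iff)
  qed
  then show ?thesis by (rule lipschitz_on_continuous_on)
qed

lemma isn_lower: assumes "is_norm (R :: real^'k2^'k1 \<Rightarrow> real)"
  shows "\<exists>m>0. \<forall>N. m * norm N \<le> R N"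
proof -
  obtain b :: "real^'k2^'k1" where b: "b \<in> Basis" using nonempty_Basis by blast
  have ne: "sphere (0::real^'k2^'k1) 1 \<noteq> {}" using b by (auto simp: norm_Basis)
  obtain x0 where x0: "x0 \<in> sphere 0 1" and mn: "\<And>y. y \<in> sphere 0 1 \<Longrightarrow> R x0 \<le> R y"
    using continuous_attains_inf[OF compact_sphere ne continuous_on_subset[OF isn_cont[OF assms]]] by blast
  have x00: "x0 \<noteq> 0" using x0 by auto
  have pos: "0 < R x0" using assms x00 unfolding is_norm_def by (metis order.not_eq_order_implies_strict)
  show ?thesis
  proof (rule exI[of _ "R x0"], intro conjI allI pos)
    fix N :: "real^'k2^'k1"
    show "R x0 * norm N \<le> R N"
    proof (cases "N = 0")
      case True then show ?thesis using isn_zero[OF assms] by simp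
    next
      case False
      have "R x0 \<le> R ((1 / norm N) *\<^sub>R N)" by (rule mn) (use False in simp)
      also have "\<dots> = R N / norm N" using assms by (simp add: is_norm_def)
      finally show ?thesis using False by (simp add: field_simps)
    qed
  qed
qed

lemma dual_nonneg: assumes "is_norm R"
  shows "0 \<le> dual_norm R M"
proof -
  obtain m where m: "m > 0" "\<And>N. m * norm N \<le> R N" using isn_lower[OF assms] by blast
  let ?S = "{frob_inner M N | N. R N \<le> 1}"
  have bdd: "bdd_above ?S"
  proof (rule bdd_aboveI)
    fix y assume "y \<in> ?S"
    then obtain N where y: "y = frob_inner M N" "R N \<le> 1" by blast
    have "norm N \<le> 1 / m" using m(2)[of N] y(2) m(1) by (simp add: field_simps)
    have "y \<le> norm M * norm N" unfolding y frob_inner_eq by (rule norm_cauchy_schwarz)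
    also have "\<dots> \<le> norm M * (1 / m)" by (rule mult_left_mono) (use \<open>norm N \<le> 1 / m\<close> in auto)
    finally show "y \<le> norm M * (1/m)" .
  qed
  show ?thesis
    unfolding dual_norm_def
    by (rule cSup_upper2[OF _ _ bdd, of 0]) (use isn_zero[OF assms] in \<open>auto simp: frob_inner_eq intro!: exI[of _ 0]\<close>)
qed

lemma dual_bound: assumes "is_norm R"
  shows "frob_inner M N \<le> R N * dual_norm R M"
proof -
  obtain m where m: "m > 0" "\<And>N. m * norm N \<le> R N" using isn_lower[OF assms] by blast
  let ?S = "{frob_inner M N | N. R N \<le> 1}"
  have bdd: "bdd_above ?S"
  proof (rule bdd_aboveI)
    fix y assume "y \<in> ?S"
    then obtain N where y: "y = frob_inner M N" "R N \<le> 1" by blast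
    have "norm N \<le> 1 / m" using m(2)[of N] y(2) m(1) by (simp add: field_simps)
    have "y \<le> norm M * norm N" unfolding y frob_inner_eq by (rule norm_cauchy_schwarz)
    also have "\<dots> \<le> norm M * (1 / m)" by (rule mult_left_mono) (use \<open>norm N \<le> 1 / m\<close> in auto)
    finally show "y \<le> norm M * (1/m)" .
  qed
  have d0: "0 \<le> dual_norm R M"
    unfolding dual_norm_def
    by (rule cSup_upper2[OF _ _ bdd, of 0]) (use isn_zero[OF assms] in \<open>auto simp: frob_inner_eq intro!: exI[of _ 0]\<close>)
  show ?thesis
  proof (cases "N = 0")
    case True then show ?thesis by (simp add: frob_inner_eq isn_zero[OF assms])
  next
    case False
    have Rp: "R N > 0" using assms False unfolding is_norm_def by (metis order.not_eq_order_implies_strict)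
    have R1: "R ((1 / R N) *\<^sub>R N) = 1" using assms Rp False by (simp add: is_norm_def)
    have mem: "frob_inner M ((1 / R N) *\<^sub>R N) \<in> ?S"
      using R1 by (intro CollectI exI[of _ "(1 / R N) *\<^sub>R N"]) simp
    have "frob_inner M ((1 / R N) *\<^sub>R N) \<le> dual_norm R M"
      unfolding dual_norm_def by (rule cSup_upper[OF mem bdd])
    then have "frob_inner M N / R N \<le> dual_norm R M" by (simp add: frob_inner_eq)
    then show ?thesis using Rp by (simp add: field_simps)
  qed
qed

lemma sym_inner: fixes A :: "real^'n^'n" assumes "transpose A = A"
  shows "(A *v x) \<bullet> y = x \<bullet> (A *v y)"
proof -
  have "x \<bullet> (A *v y) = (x v* A) \<bullet> y" by (simp add: dot_lmul_matrix)
  also have "x v* A = transpose A *v x" by simp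
  finally show ?thesis using assms by simp
qed

lemma quad_lemma: fixes a b :: real assumes "\<And>t. a * t + b * t^2 \<le> 0" shows "a = 0"
proof (rule ccontr)
  assume "a \<noteq> 0"
  define c where "c = \<bar>b\<bar> + 1"
  have c0: "c > 0" "\<bar>b\<bar> < c" unfolding c_def by auto
  define t where "t = a / c"
  have h: "a * t + b * t^2 = t * a * (1 + b / c)"
    using c0 by (simp add: t_def power2_eq_square field_simps)
  have "t * a = a * a / c" by (simp add: t_def)
  moreover have "a * a > 0" using \<open>a \<noteq> 0\<close> by (simp add: zero_less_mult_iff linorder_neq_iff disj_commute)
  ultimately have p1: "t * a > 0" using c0 by simp
  have "1 + b / c = (c + b) / c" using c0 by (simp add: field_simps)
  moreover have "c + b > 0" using c0 by linarith
  ultimately have p2: "1 + b / c > 0" using c0 by simp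
  have "a * t + b * t^2 > 0" unfolding h using p1 p2 by simp
  then show False using assms[of t] by simp
qed

lemma sym_eig_exists: fixes A :: "real^'n^'n" assumes sym: "transpose A = A"
  shows "\<exists>mu. is_eigenvalue A mu"
proof -
  define q where "q u = u \<bullet> (A *v u)" for u :: "real^'n"
  have cq: "continuous_on UNIV q" unfolding q_def
    by (intro continuous_intros linear_continuous_on matrix_vector_mul_linear linear_linear[THEN iffD1])
  obtain b :: "real^'n" where b: "b \<in> Basis" using nonempty_Basis by blast
  have ne: "sphere (0::real^'n) 1 \<noteq> {}" using b by (auto simp: norm_Basis)
  obtain v0 where v0: "v0 \<in> sphere 0 1" and mx: "\<And>y. y \<in> sphere 0 1 \<Longrightarrow> q y \<le> q v0"
    using continuous_attains_sup[OF compact_sphere ne continuous_on_subset[OF cq]] by blast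
  define lam where "lam = q v0"
  have vv: "v0 \<bullet> v0 = 1" using v0 by (simp add: dot_square_norm)
  have qle: "q u \<le> lam * (u \<bullet> u)" for u
  proof (cases "u = 0")
    case True then show ?thesis by (simp add: q_def)
  next
    case False
    have "q ((1 / norm u) *\<^sub>R u) \<le> lam" unfolding lam_def by (rule mx) (use False in simp)
    moreover have "q ((1 / norm u) *\<^sub>R u) = q u / (norm u)^2"
      by (simp add: q_def matrix_vector_mult_scaleR power2_eq_square)
    ultimately have "q u \<le> lam * (norm u)^2" using False by (simp add: field_simps)
    then show ?thesis by (simp add: power2_norm_eq_inner)
  qed
  define z where "z = A *v v0 - lam *\<^sub>R v0"
  have key: "2 * (z \<bullet> z) * t + (q z - lam * (z \<bullet> z)) * t^2 \<le> 0" for t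
  proof -
    have e1: "q (v0 + t *\<^sub>R z) = q v0 + 2 * t * (z \<bullet> (A *v v0)) + t^2 * q z"
    proof -
      have Ad: "A *v (v0 + t *\<^sub>R z) = A *v v0 + t *\<^sub>R (A *v z)"
        by (simp add: matrix_vector_right_distrib matrix_vector_mult_scaleR)
      have s1: "v0 \<bullet> (A *v z) = z \<bullet> (A *v v0)"
        using sym_inner[OF sym, of v0 z] by (simp add: inner_commute)
      have "q (v0 + t *\<^sub>R z) = v0 \<bullet> (A *v v0) + t * (v0 \<bullet> (A *v z)) + t * (z \<bullet> (A *v v0)) + t * t * (z \<bullet> (A *v z))"
        unfolding q_def Ad by (simp add: inner_add_left inner_add_right distrib_left)
      then show ?thesis unfolding s1 by (simp add: q_def power2_eq_square)
    qed
    have e2: "(v0 + t *\<^sub>R z) \<bullet> (v0 + t *\<^sub>R z) = 1 + 2 * t * (z \<bullet> v0) + t^2 * (z \<bullet> z)"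
    proof -
      have "(v0 + t *\<^sub>R z) \<bullet> (v0 + t *\<^sub>R z) = v0 \<bullet> v0 + t * (v0 \<bullet> z) + t * (z \<bullet> v0) + t * t * (z \<bullet> z)"
        by (simp add: inner_add_left inner_add_right distrib_left)
      then show ?thesis using vv by (simp add: inner_commute[of v0 z] power2_eq_square)
    qed
    have "z \<bullet> z = z \<bullet> (A *v v0) - lam * (z \<bullet> v0)" unfolding z_def
      by (simp add: inner_diff_right inner_diff_left algebra_simps)
    then have zA: "z \<bullet> (A *v v0) = z \<bullet> z + lam * (z \<bullet> v0)" by simp
    have alg: "2 * (z \<bullet> z) * t + (q z - lam * (z \<bullet> z)) * t^2 =
        (lam + 2 * t * (z \<bullet> (A *v v0)) + t^2 * q z) - lam * (1 + 2 * t * (z \<bullet> v0) + t^2 * (z \<bullet> z))"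
      unfolding zA by (simp add: algebra_simps power2_eq_square)
    show ?thesis unfolding alg using qle[of "v0 + t *\<^sub>R z"] unfolding e1 e2 lam_def by simp
  qed
  have "2 * (z \<bullet> z) = 0" by (rule quad_lemma[OF key])
  then have "z = 0" by simp
  then have "A *v v0 = lam *\<^sub>R v0" unfolding z_def by simp
  moreover have "v0 \<noteq> 0" using v0 by auto
  ultimately show ?thesis unfolding is_eigenvalue_def by blast
qed

lemma sym_eig_finite: fixes A :: "real^'n^'n" assumes sym: "transpose A = A"
  shows "finite {mu. is_eigenvalue A mu}"
proof -
  define E where "E = {mu. is_eigenvalue A mu}"
  define ev where "ev mu = (SOME v. v \<noteq> 0 \<and> A *v v = mu *\<^sub>R v)" for mu
  have evp: "ev mu \<noteq> 0 \<and> A *v ev mu = mu *\<^sub>R ev mu" if "mu \<in> E" for mu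
  proof -
    have "\<exists>v. v \<noteq> 0 \<and> A *v v = mu *\<^sub>R v" using that unfolding E_def is_eigenvalue_def by simp
    then show ?thesis unfolding ev_def by (rule someI_ex)
  qed
  have orth: "ev mu \<bullet> ev nu = 0" if "mu \<in> E" "nu \<in> E" "mu \<noteq> nu" for mu nu
  proof -
    have "mu * (ev mu \<bullet> ev nu) = (A *v ev mu) \<bullet> ev nu" using evp[OF that(1)] by simp
    also have "\<dots> = ev mu \<bullet> (A *v ev nu)" by (rule sym_inner[OF sym])
    also have "\<dots> = nu * (ev mu \<bullet> ev nu)" using evp[OF that(2)] by simp
    finally have "(mu - nu) * (ev mu \<bullet> ev nu) = 0" by (simp add: algebra_simps)
    then show ?thesis using that(3) by simp
  qed
  have inj: "inj_on ev E"
  proof (rule inj_onI)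
    fix mu nu assume h: "mu \<in> E" "nu \<in> E" "ev mu = ev nu"
    have e1: "A *v ev mu = mu *\<^sub>R ev mu" using evp[OF h(1)] by blast
    have e2: "A *v ev mu = nu *\<^sub>R ev mu" using evp[OF h(2)] h(3) by metis
    have "(mu - nu) *\<^sub>R ev mu = 0" using e1 e2 by (metis right_minus_eq scaleR_left_diff_distrib)
    then show "mu = nu" using evp[OF h(1)] by (metis eq_iff_diff_eq_0 scaleR_eq_0_iff)
  qed
  have "pairwise orthogonal (ev ` E)"
  proof (rule pairwiseI)
    fix x y assume "x \<in> ev ` E" "y \<in> ev ` E" "x \<noteq> y"
    then obtain mu nu where "mu \<in> E" "nu \<in> E" "x = ev mu" "y = ev nu" by blast
    moreover have "mu \<noteq> nu" using calculation \<open>x \<noteq> y\<close> by blast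
    ultimately show "orthogonal x y" unfolding orthogonal_def using orth by blast
  qed
  moreover have "0 \<notin> ev ` E"
  proof
    assume "0 \<in> ev ` E"
    then obtain mu where "mu \<in> E" "0 = ev mu" by blast
    then show False using evp by metis
  qed
  ultimately have "independent (ev ` E)" by (rule pairwise_orthogonal_independent)
  then have "finite (ev ` E)" using independent_bound by metis
  then show ?thesis using finite_imageD[OF _ inj] unfolding E_def by blast
qed

lemma largest_le: fixes A :: "real^'n^'n" assumes sym: "transpose A = A"
  and bnd: "\<And>mu v. v \<noteq> 0 \<Longrightarrow> A *v v = mu *\<^sub>R v \<Longrightarrow> mu \<le> B"
  shows "largest_eigenvalue A \<le> B"
proof -
  have f: "finite {mu. is_eigenvalue A mu}" by (rule sym_eig_finite[OF sym])
  have ne: "{mu. is_eigenvalue A mu} \<noteq> {}" using sym_eig_exists[OF sym] by blast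
  show ?thesis unfolding largest_eigenvalue_def
    using bnd by (subst Max_le_iff[OF f ne]) (auto simp: is_eigenvalue_def)
qed

lemma pd_exp: fixes c :: "nat \<Rightarrow> real^'n" assumes "finite S"
  shows "partial_deriv (\<lambda>v. \<Sum>t\<in>S. b t * exp (-(v \<bullet> c t))) k w
       = (\<Sum>t\<in>S. b t * (-(c t $ k)) * exp (-(w \<bullet> c t)))"
proof -
  have fe: "(\<lambda>s. (\<Sum>t\<in>S. b t * exp (-((w + s *\<^sub>R axis k 1) \<bullet> c t))))
      = (\<lambda>s. \<Sum>t\<in>S. b t * exp (-(w \<bullet> c t + s * c t $ k)))"
    by (simp add: inner_add_left inner_axis')
  have "((\<lambda>s. \<Sum>t\<in>S. b t * exp (-(w \<bullet> c t + s * c t $ k))) has_field_derivative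
      (\<Sum>t\<in>S. b t * (-(c t $ k)) * exp (-(w \<bullet> c t)))) (at 0)"
    by (rule derivative_eq_intros refl | simp add: mult_ac)+
  then show ?thesis unfolding partial_deriv_def fe by (rule DERIV_imp_deriv)
qed

lemma hess_form: fixes c :: "nat \<Rightarrow> real^'n" assumes "finite S"
  shows "hessian (\<lambda>v. \<Sum>t\<in>S. b t * exp (-(v \<bullet> c t))) w
    = (\<chi> k l. \<Sum>t\<in>S. b t * (-(c t $ l)) * (-(c t $ k)) * exp (-(w \<bullet> c t)))"
proof -
  have e: "(\<lambda>w. partial_deriv (\<lambda>v. \<Sum>t\<in>S. b t * exp (-(v \<bullet> c t))) l w)
     = (\<lambda>w. \<Sum>t\<in>S. (b t * (-(c t $ l))) * exp (-(w \<bullet> c t)))" for l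
    by (rule ext) (rule pd_exp[OF assms])
  show ?thesis unfolding hessian_def e pd_exp[OF assms] ..
qed

lemma eig_bound: fixes c :: "nat \<Rightarrow> real^'n" assumes S: "finite S"
  and b0: "\<And>t. t \<in> S \<Longrightarrow> 0 \<le> b t" and b1: "sum b S \<le> 1"
  and B0: "0 \<le> B" and cb: "\<And>t. t \<in> S \<Longrightarrow> exp (-(w \<bullet> c t)) * (c t \<bullet> c t) \<le> B"
  shows "largest_eigenvalue (\<chi> k l. \<Sum>t\<in>S. b t * (-(c t $ l)) * (-(c t $ k)) * exp (-(w \<bullet> c t))) \<le> B"
    (is "largest_eigenvalue ?H \<le> B")
proof (rule largest_le)
  show "transpose ?H = ?H" by (simp add: transpose_def vec_eq_iff mult_ac)
next
  fix mu v assume v0: "v \<noteq> 0" and ev: "?H *v v = mu *\<^sub>R v"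
  define e where "e t = exp (-(w \<bullet> c t))" for t
  have Hv: "?H *v v = (\<Sum>t\<in>S. (b t * e t * (c t \<bullet> v)) *\<^sub>R c t)"
  proof -
    have "(?H *v v) $ k = (\<Sum>t\<in>S. (b t * e t * (c t \<bullet> v)) *\<^sub>R c t) $ k" for k
    proof -
      have "(?H *v v) $ k = (\<Sum>l\<in>UNIV. \<Sum>t\<in>S. b t * e t * c t $ k * (c t $ l * v $ l))"
        by (simp add: matrix_vector_mult_def sum_distrib_right sum_distrib_left e_def mult_ac)
      also have "\<dots> = (\<Sum>t\<in>S. \<Sum>l\<in>UNIV. b t * e t * c t $ k * (c t $ l * v $ l))"
        by (rule sum.swap)
      also have "\<dots> = (\<Sum>t\<in>S. (b t * e t * (c t \<bullet> v)) *\<^sub>R c t) $ k"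
        by (simp add: sum_component inner_vec_def sum_distrib_left mult_ac)
      finally show ?thesis .
    qed
    then show ?thesis by (simp add: vec_eq_iff)
  qed
  have "mu * (v \<bullet> v) = v \<bullet> (?H *v v)" using ev by simp
  also have "\<dots> = (\<Sum>t\<in>S. b t * e t * (c t \<bullet> v)\<^sup>2)"
    unfolding Hv by (simp add: inner_sum_right power2_eq_square inner_commute mult_ac)
  also have "\<dots> \<le> (\<Sum>t\<in>S. b t * (B * (v \<bullet> v)))"
  proof (rule sum_mono)
    fix t assume t: "t \<in> S"
    have "e t * (c t \<bullet> v)\<^sup>2 \<le> e t * ((c t \<bullet> c t) * (v \<bullet> v))"
      by (rule mult_left_mono[OF Cauchy_Schwarz_ineq]) (simp add: e_def)
    also have "\<dots> = (e t * (c t \<bullet> c t)) * (v \<bullet> v)" by simp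
    also have "\<dots> \<le> B * (v \<bullet> v)" by (rule mult_right_mono) (use cb[OF t] in \<open>auto simp: e_def\<close>)
    finally show "b t * e t * (c t \<bullet> v)\<^sup>2 \<le> b t * (B * (v \<bullet> v))"
      using b0[OF t] by (simp add: mult_left_mono mult.assoc)
  qed
  also have "\<dots> = sum b S * (B * (v \<bullet> v))" by (simp add: sum_distrib_right)
  also have "\<dots> \<le> 1 * (B * (v \<bullet> v))" by (rule mult_right_mono[OF b1]) (simp add: B0)
  finally have "mu * (v \<bullet> v) \<le> B * (v \<bullet> v)" by simp
  moreover have "v \<bullet> v > 0" using v0 by simp
  ultimately show "mu \<le> B" by simp
qed

lemma sum_UNIV_prod: "sum g (UNIV :: ('a::finite \<times> 'b::finite) set) = (\<Sum>i\<in>UNIV. \<Sum>j\<in>UNIV. g (i, j))"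
  by (simp add: sum.cartesian_product)

lemma unvec_inner: "frob_inner (unvec v) M = v \<bullet> vecm M"
  unfolding inner_vec_def sum_UNIV_prod by (simp add: frob_inner_def unvec_def vecm_def)

lemma vecm_inner: "vecm M \<bullet> vecm N = M \<bullet> N"
  unfolding inner_vec_def[of "vecm M"] sum_UNIV_prod by (simp add: vecm_def inner_vec_def)

lemma set_int_sum: fixes f :: "'i \<Rightarrow> 'a \<Rightarrow> real"
  assumes "finite I" "\<And>i. i \<in> I \<Longrightarrow> set_integrable M A (f i)"
  shows "set_integrable M A (\<lambda>x. \<Sum>i\<in>I. f i x) \<and> (LINT x:A|M. (\<Sum>i\<in>I. f i x)) = (\<Sum>i\<in>I. LINT x:A|M. f i x)"
  using assms
proof (induction I rule: finite_induct)
  case empty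
  then show ?case by (simp add: set_integrable_def set_lebesgue_integral_def)
next
  case (insert a F)
  then have ia: "set_integrable M A (f a)" and ih: "set_integrable M A (\<lambda>x. \<Sum>i\<in>F. f i x)"
    "(LINT x:A|M. (\<Sum>i\<in>F. f i x)) = (\<Sum>i\<in>F. LINT x:A|M. f i x)" by auto
  show ?case using set_integral_add[OF ia ih(1)] ih(2) insert(1,2) by simp
qed

lemma int_le: fixes f :: "'a::euclidean_space \<Rightarrow> real"
  assumes "set_integrable lborel X f" "X \<in> sets lborel" "emeasure lborel X < \<infinity>" "\<And>x. x \<in> X \<Longrightarrow> f x \<le> K"
  shows "(LINT x:X|lborel. f x) \<le> K * measure lborel X"
proof -
  have ci: "set_integrable lborel X (\<lambda>_. K)"
    unfolding set_integrable_def using assms(2,3) by (intro integrable_scaleR_left integrable_real_indicator) auto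
  have "(LINT x:X|lborel. f x) \<le> (LINT x:X|lborel. K)" by (rule set_integral_mono[OF assms(1) ci assms(4)])
  also have "\<dots> = K * measure lborel X" using assms(2,3) by (simp add: set_integral_const)
  finally show ?thesis .
qed

lemma int_ge: fixes f :: "'a::euclidean_space \<Rightarrow> real"
  assumes "set_integrable lborel X f" "X \<in> sets lborel" "emeasure lborel X < \<infinity>" "\<And>x. x \<in> X \<Longrightarrow> K \<le> f x"
  shows "K * measure lborel X \<le> (LINT x:X|lborel. f x)"
proof -
  have ci: "set_integrable lborel X (\<lambda>_. K)"
    unfolding set_integrable_def using assms(2,3) by (intro integrable_scaleR_left integrable_real_indicator) auto
  have "(LINT x:X|lborel. K) \<le> (LINT x:X|lborel. f x)" by (rule set_integral_mono[OF ci assms(1) assms(4)])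
  moreover have "(LINT x:X|lborel. K) = K * measure lborel X" using assms(2,3) by (simp add: set_integral_const)
  ultimately show ?thesis by simp
qed

lemma meas_pos: assumes "0 < emeasure lborel X" "emeasure lborel X < \<infinity>"
  shows "0 < measure lborel X"
  using assms by (simp add: measure_def enn2real_positive_iff)

lemma mean_entry: fixes X :: "(real^'p) set" and Phi :: "real^'p \<Rightarrow> real^'k2^'k1"
  assumes "X \<in> sets lborel" "0 < emeasure lborel X" "emeasure lborel X < \<infinity>"
    "\<forall>i j. set_integrable lborel X (\<lambda>x. Phi x $ i $ j)"
    "\<And>x i j. x \<in> X \<Longrightarrow> \<bar>Phi x $ i $ j\<bar> \<le> phi"
  shows "\<bar>unif_mean X Phi $ i $ j\<bar> \<le> phi"
proof -
  have m: "0 < measure lborel X" by (rule meas_pos[OF assms(2,3)])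
  have u: "(LINT x:X|lborel. Phi x $ i $ j) \<le> phi * measure lborel X"
    by (rule int_le) (use assms in \<open>auto simp: abs_le_iff\<close>)
  have l: "(-phi) * measure lborel X \<le> (LINT x:X|lborel. Phi x $ i $ j)"
  proof (rule int_ge)
    fix x assume "x \<in> X"
    then show "- phi \<le> Phi x $ i $ j" using assms(5)[of x i j] by linarith
  qed (use assms in auto)
  show ?thesis unfolding unif_mean_def using u l m by (simp add: abs_le_iff field_simps)
qed

lemma mean_inner: fixes X :: "(real^'p) set" and Phi :: "real^'p \<Rightarrow> real^'k2^'k1"
  assumes "X \<in> sets lborel" "0 < emeasure lborel X" "emeasure lborel X < \<infinity>"
    "\<forall>i j. set_integrable lborel X (\<lambda>x. Phi x $ i $ j)"
    "\<And>x. x \<in> X \<Longrightarrow> Theta \<bullet> Phi x \<le> K"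
  shows "Theta \<bullet> unif_mean X Phi \<le> K"
proof -
  have m: "0 < measure lborel X" by (rule meas_pos[OF assms(2,3)])
  have inner_i: "set_integrable lborel X (\<lambda>x. \<Sum>j\<in>UNIV. Theta $ i $ j * Phi x $ i $ j) \<and>
     (LINT x:X|lborel. (\<Sum>j\<in>UNIV. Theta $ i $ j * Phi x $ i $ j)) = (\<Sum>j\<in>UNIV. LINT x:X|lborel. Theta $ i $ j * Phi x $ i $ j)" for i
    by (rule set_int_sum) (use assms(4) in auto)
  have tot: "set_integrable lborel X (\<lambda>x. \<Sum>i\<in>UNIV. \<Sum>j\<in>UNIV. Theta $ i $ j * Phi x $ i $ j) \<and>
     (LINT x:X|lborel. (\<Sum>i\<in>UNIV. \<Sum>j\<in>UNIV. Theta $ i $ j * Phi x $ i $ j)) = (\<Sum>i\<in>UNIV. LINT x:X|lborel. (\<Sum>j\<in>UNIV. Theta $ i $ j * Phi x $ i $ j))"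
    by (rule set_int_sum) (use inner_i in auto)
  have ip: "Theta \<bullet> Phi x = (\<Sum>i\<in>UNIV. \<Sum>j\<in>UNIV. Theta $ i $ j * Phi x $ i $ j)" for x
    by (simp add: inner_vec_def)
  have "(LINT x:X|lborel. (\<Sum>i\<in>UNIV. \<Sum>j\<in>UNIV. Theta $ i $ j * Phi x $ i $ j)) \<le> K * measure lborel X"
    by (rule int_le) (use tot assms(1,3,5) ip in auto)
  moreover have "(LINT x:X|lborel. (\<Sum>i\<in>UNIV. \<Sum>j\<in>UNIV. Theta $ i $ j * Phi x $ i $ j))
      = (Theta \<bullet> unif_mean X Phi) * measure lborel X"
    using tot inner_i m by (simp add: unif_mean_def inner_vec_def sum_distrib_right)
  ultimately show ?thesis using m by simp
qed

lemma max_norm_ge: "\<bar>M $ i $ j\<bar> \<le> max_norm M"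
proof -
  have "{\<bar>M$i$j\<bar> | i j. True} = (\<lambda>(i,j). \<bar>M$i$j\<bar>) ` UNIV" by auto
  then have "finite {\<bar>M$i$j\<bar> | i j. True}" by simp
  then show ?thesis unfolding max_norm_def by (rule Max_ge) blast
qed

theorem propositionB1:
  fixes X :: "(real^'p) set"
    and Phi :: "real^'p \<Rightarrow> real^'k2^'k1"
    and R :: "real^'k2^'k1 \<Rightarrow> real"
    and Theta_star :: "real^'k2^'k1"
    and r d phi_max rbar :: real
    and n :: nat and xs :: "nat \<Rightarrow> real^'p"
  assumes "bounded X" and "X \<in> sets lborel"
    and "0 < emeasure lborel X" and "emeasure lborel X < \<infinity>"
    and "\<forall>i j. set_integrable lborel X (\<lambda>x. Phi x $ i $ j)"
    and "is_norm R"
    and "R Theta_star \<le> r"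
    and "\<forall>x\<in>X. dual_norm R (Phi x) \<le> d"
    and "\<forall>x\<in>X. max_norm (Phi x) \<le> phi_max"
    and "\<forall>t\<in>{1..n}. xs t \<in> X"
    and "0 < rbar"
  shows "\<forall>Theta. R Theta \<le> rbar \<longrightarrow>
    largest_eigenvalue (hessian (\<lambda>v. loss_n X Phi n xs (unvec v)) (vecm Theta))
      \<le> 4 * real CARD('k1) * real CARD('k2) * phi_max^2 * exp (2 * rbar * d)"
proof (intro allI impI)
  fix Theta :: "real^'k2^'k1" assume RT: "R Theta \<le> rbar"
  note Rn = assms(6)
  define c where "c t = vecm (centered_stat X Phi (xs t))" for t
  define B where "B = 4 * real CARD('k1) * real CARD('k2) * phi_max^2 * exp (2 * rbar * d)"
  have feq: "(\<lambda>v. loss_n X Phi n xs (unvec v)) = (\<lambda>v. \<Sum>t\<in>{1..n}. (1 / real n) * exp (-(v \<bullet> c t)))"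
    by (rule ext) (simp add: loss_n_def unvec_inner sum_distrib_left c_def)
  have RT0: "0 \<le> R Theta" using Rn by (simp add: is_norm_def)
  have Rneg: "R (- Theta) = R Theta" using Rn unfolding is_norm_def by (metis abs_neg_one mult_1 scaleR_minus1_left)
  have phib: "\<bar>Phi y $ i $ j\<bar> \<le> phi_max" if "y \<in> X" for y i j
    using max_norm_ge[of "Phi y" i j] assms(9) that by fastforce
  have innb: "frob_inner (Phi y) N \<le> R N * d" if "y \<in> X" for y N
  proof -
    have "frob_inner (Phi y) N \<le> R N * dual_norm R (Phi y)" by (rule dual_bound[OF Rn])
    also have "\<dots> \<le> R N * d" using assms(8) that Rn by (intro mult_left_mono) (auto simp: is_norm_def)
    finally show ?thesis .
  qed
  have cb: "exp (-(vecm Theta \<bullet> c t)) * (c t \<bullet> c t) \<le> B" if t: "t \<in> {1..n}" for t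
  proof -
    define x where "x = xs t"
    have x: "x \<in> X" using assms(10) t unfolding x_def by blast
    have d0: "0 \<le> d" using dual_nonneg[OF Rn, of "Phi x"] assms(8) x by fastforce
    have phi0: "0 \<le> phi_max" using phib[OF x] by (meson abs_ge_zero order_trans)
    define C where "C = centered_stat X Phi x"
    have cC: "c t = vecm C" unfolding c_def C_def x_def ..
    have mb: "\<bar>unif_mean X Phi $ i $ j\<bar> \<le> phi_max" for i j
      by (rule mean_entry) (use assms(2,3,4,5) phib in auto)
    have Cb: "\<bar>C $ i $ j\<bar> \<le> 2 * phi_max" for i j
      using phib[OF x, of i j] mb[of i j] unfolding C_def centered_stat_def by simp
    have CC: "c t \<bullet> c t \<le> 4 * real CARD('k1) * real CARD('k2) * phi_max^2"
    proof -
      have sq: "C $ i $ j * C $ i $ j \<le> 4 * phi_max^2" for i j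
      proof -
        have "C $ i $ j * C $ i $ j = \<bar>C $ i $ j\<bar> * \<bar>C $ i $ j\<bar>" by simp
        also have "\<dots> \<le> (2 * phi_max) * (2 * phi_max)" using Cb[of i j] by (intro mult_mono) auto
        finally show ?thesis by (simp add: power2_eq_square)
      qed
      have "c t \<bullet> c t = (\<Sum>i\<in>UNIV. \<Sum>j\<in>UNIV. C $ i $ j * C $ i $ j)"
        unfolding cC vecm_inner by (simp add: inner_vec_def)
      also have "\<dots> \<le> (\<Sum>i\<in>(UNIV::'k1 set). \<Sum>j\<in>(UNIV::'k2 set). 4 * phi_max^2)"
        by (intro sum_mono sq)
      also have "\<dots> = 4 * real CARD('k1) * real CARD('k2) * phi_max^2" by simp
      finally show ?thesis .
    qed
    have ex: "-(vecm Theta \<bullet> c t) \<le> 2 * rbar * d"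
    proof -
      have "-(vecm Theta \<bullet> c t) = frob_inner (Phi x) (- Theta) + Theta \<bullet> unif_mean X Phi"
        unfolding cC vecm_inner C_def centered_stat_def frob_inner_eq
        by (simp add: inner_diff_right inner_commute)
      also have "frob_inner (Phi x) (- Theta) \<le> rbar * d"
        using innb[OF x, of "- Theta"] Rneg RT d0 by (metis mult_right_mono order_trans)
      also have "Theta \<bullet> unif_mean X Phi \<le> rbar * d"
      proof (rule mean_inner)
        fix y assume y: "y \<in> X"
        have "Theta \<bullet> Phi y = frob_inner (Phi y) Theta" by (simp add: frob_inner_eq inner_commute)
        also have "\<dots> \<le> R Theta * d" by (rule innb[OF y])
        also have "\<dots> \<le> rbar * d" using RT d0 by (rule mult_right_mono)
        finally show "Theta \<bullet> Phi y \<le> rbar * d" .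
      qed (use assms(2,3,4,5) in auto)
      finally show ?thesis by (simp add: mult_ac)
    qed
    have "exp (-(vecm Theta \<bullet> c t)) * (c t \<bullet> c t) \<le> exp (2 * rbar * d) * (4 * real CARD('k1) * real CARD('k2) * phi_max^2)"
    proof (rule mult_mono[OF _ CC])
      show "exp (-(vecm Theta \<bullet> c t)) \<le> exp (2 * rbar * d)" using ex by (subst exp_le_cancel_iff)
    qed auto
    then show ?thesis unfolding B_def by (simp add: mult_ac)
  qed
  have b1: "(\<Sum>t\<in>{1..n}. 1 / real n) \<le> 1" by simp
  have B0: "0 \<le> B" unfolding B_def by simp
  show "largest_eigenvalue (hessian (\<lambda>v. loss_n X Phi n xs (unvec v)) (vecm Theta))
      \<le> 4 * real CARD('k1) * real CARD('k2) * phi_max^2 * exp (2 * rbar * d)"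
    unfolding feq B_def[symmetric] hess_form[OF finite_atLeastAtMost]
    by (rule eig_bound[OF finite_atLeastAtMost _ b1 B0 cb]) simp_all
qed

end
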